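(* Let $\mu\in(0,1)$ and let $\beta:[0,\infty)\to(0,\infty)$ be positive, bounded, non-increasing with $\lim_{a\to\infty}a\beta(a)=\mu$, and suppose $\beta(a)=\frac{\mu}{1+a}+g(a)$ where $g\in L^1(0,\infty)$ and there exist $K_0,\alpha>0$ with $\int_a^\infty|g(s)|ds\le K_0(1+a)^{-\alpha}$ for all $a\ge0$. Let $B(a)=\int_0^a\beta$ and $W(\tau,b)=C(\tau)e^{-B(e^{\tau}b)}(1-b)^{\mu-1}$ on $[0,1)$ with $C(\tau)>0$ such that $\int_0^1W(\tau,b)db=1$. Then there exists $K>0$ such that for all $\tau\ge0$ and $0\le b<1$, $$\frac{K^{-1}e^{\mu\tau}}{(1+e^{\tau}b)^\mu(1-b)^{1-\mu}}\le W(\tau,b)\le\frac{Ke^{\mu\tau}}{(1+e^{\tau}b)^\mu(1-b)^{1-\mu}}.$$ *)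

theory Defs
  imports "HOL-Analysis.Analysis"
begin

definition Bfun :: "(real \<Rightarrow> real) \<Rightarrow> real \<Rightarrow> real" where
  "Bfun \<beta> a = integral {0..a} \<beta>"

definition Wfun :: "real \<Rightarrow> (real \<Rightarrow> real) \<Rightarrow> (real \<Rightarrow> real) \<Rightarrow> real \<Rightarrow> real \<Rightarrow> real" where
  "Wfun \<mu> \<beta> C \<tau> b = C \<tau> * exp (- Bfun \<beta> (exp \<tau> * b)) * (1 - b) powr (\<mu> - 1)"

end

theory Submission
  imports Defs
begin

lemma int_refl:
  assumes "0 < (m::real)"
  shows "((\<lambda>x. (1-x) powr (m-1)) has_integral (1/m)) {0..1::real}"
proof -
  have "((\<lambda>x. (1-x) powr (m-1)) has_integral ((\<lambda>x. - ((1-x) powr m / m)) 1 - (\<lambda>x. - ((1-x) powr m / m)) 0)) {0..1::real}"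
  proof (rule fundamental_theorem_of_calculus_interior)
    show "continuous_on {0..1::real} (\<lambda>x. - ((1 - x) powr m / m))"
      using assms by (intro continuous_intros continuous_on_powr') auto
    fix x :: real assume x: "x \<in> {0<..<1}"
    have "((\<lambda>x. - ((1 - x) powr m / m)) has_real_derivative (1-x) powr (m-1)) (at x)"
      using x assms by (auto intro!: derivative_eq_intros simp: field_simps)
    then show "((\<lambda>x. - ((1 - x) powr m / m)) has_vector_derivative (1-x) powr (m-1)) (at x)"
      by (simp add: has_real_derivative_iff_has_vector_derivative)
  qed simp
  then show ?thesis using assms by simp
qed

lemma int_pow:
  assumes "0 < (m::real)" "m < 1"
  shows "((\<lambda>x. x powr (-m)) has_integral (1/(1-m))) {0..1::real}"
  using has_integral_powr_from_0[of "-m" 1] assms by simp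

lemma spike01:
  fixes f :: "real \<Rightarrow> real"
  shows  "(f has_integral i) {0..1::real} \<longleftrightarrow> (f has_integral i) {0<..<1}"
proof (rule has_integral_spike_set_eq)
  show "negligible {x \<in> {0..1} - {0<..<1}. f x \<noteq> 0}" by (rule negligible_subset[of "{0,1}"]) auto
  show "negligible {x \<in> {0<..<1} - {0..1}. f x \<noteq> 0}" by (rule negligible_subset[of "{0,1}"]) auto
qed

lemma spike01':
  fixes f :: "real \<Rightarrow> real"
  shows  "(f has_integral i) {0..<1::real} \<longleftrightarrow> (f has_integral i) {0<..<1}"
proof (rule has_integral_spike_set_eq)
  show "negligible {x \<in> {0..<1} - {0<..<1}. f x \<noteq> 0}" by (rule negligible_subset[of "{0,1}"]) auto
  show "negligible {x \<in> {0<..<1} - {0..<1}. f x \<noteq> 0}" by (rule negligible_subset[of "{0,1}"]) auto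
qed

lemma int_log:
  assumes "0 \<le> (a::real)"
  shows "((\<lambda>s. m/(1+s)) has_integral (m * ln (1+a))) {0..a}"
proof -
  have "((\<lambda>s. m/(1+s)) has_integral ((\<lambda>x. m * ln (1+x)) a - (\<lambda>x. m * ln (1+x)) 0)) {0..a}"
  proof (rule fundamental_theorem_of_calculus_interior)
    show "continuous_on {0..a} (\<lambda>x. m * ln (1 + x))"
      by (intro continuous_intros) auto
    fix x :: real assume x: "x \<in> {0<..<a}"
    have "((\<lambda>x. m * ln (1 + x)) has_real_derivative m/(1+x)) (at x)"
      using x by (auto intro!: derivative_eq_intros simp: field_simps)
    then show "((\<lambda>x. m * ln (1 + x)) has_vector_derivative m/(1+x)) (at x)"
      by (simp add: has_real_derivative_iff_has_vector_derivative)
  qed (use assms in simp)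
  then show ?thesis by simp
qed

lemma Bbound:
  assumes decomp: "\<forall>a\<ge>0. \<beta> a = \<mu> / (1 + a) + g a"
    and gL1: "g absolutely_integrable_on {0..}"
    and t0: "integral {0..} (\<lambda>s. \<bar>g s\<bar>) \<le> K0"
    and a: "0 \<le> a"
  shows "\<bar>Bfun \<beta> a - \<mu> * ln (1+a)\<bar> \<le> K0"
proof -
  have gi0: "g integrable_on {0..}" and ai0: "(\<lambda>s. \<bar>g s\<bar>) integrable_on {0..}"
    using gL1 by (auto simp: absolutely_integrable_on_def)
  have sub: "{0..a} \<subseteq> {0::real..}" by auto
  have gi: "g integrable_on {0..a}" by (rule integrable_on_subinterval[OF gi0 sub])
  have ai: "(\<lambda>s. \<bar>g s\<bar>) integrable_on {0..a}" by (rule integrable_on_subinterval[OF ai0 sub])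
  have "Bfun \<beta> a = integral {0..a} (\<lambda>s. \<mu>/(1+s) + g s)"
    unfolding Bfun_def by (rule integral_cong) (use decomp in auto)
  also have "\<dots> = \<mu> * ln (1+a) + integral {0..a} g"
    using has_integral_add[OF int_log[OF a, of \<mu>] integrable_integral[OF gi]] by (rule integral_unique)
  finally have eq: "Bfun \<beta> a - \<mu> * ln (1+a) = integral {0..a} g" by simp
  have "norm (integral {0..a} g) \<le> integral {0..a} (\<lambda>s. \<bar>g s\<bar>)"
    by (rule integral_norm_bound_integral[OF gi ai]) simp
  also have "\<dots> \<le> integral {0..} (\<lambda>s. \<bar>g s\<bar>)"
    by (rule integral_subset_le[OF sub ai ai0]) simp
  finally show ?thesis using eq t0 by simp
qed
theorem lemma7:
  fixes \<mu> K0 \<alpha> :: real and \<beta> g C :: "real \<Rightarrow> real"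
  assumes mu: "0 < \<mu>" "\<mu> < 1"
    and pos: "\<forall>a\<ge>0. \<beta> a > 0"
    and bdd: "\<exists>M. \<forall>a\<ge>0. \<beta> a \<le> M"
    and noninc: "\<forall>a b. 0 \<le> a \<longrightarrow> a \<le> b \<longrightarrow> \<beta> b \<le> \<beta> a"
    and lim: "((\<lambda>a. a * \<beta> a) \<longlongrightarrow> \<mu>) at_top"
    and decomp: "\<forall>a\<ge>0. \<beta> a = \<mu> / (1 + a) + g a"
    and gL1: "g absolutely_integrable_on {0..}"
    and K0: "K0 > 0" and alpha: "\<alpha> > 0"
    and tail: "\<forall>a\<ge>0. integral {a..} (\<lambda>s. \<bar>g s\<bar>) \<le> K0 * (1 + a) powr (- \<alpha>)"
    and Cpos: "\<forall>\<tau>\<ge>0. C \<tau> > 0"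
    and Cnorm: "\<forall>\<tau>\<ge>0. (Wfun \<mu> \<beta> C \<tau> has_integral 1) {0..<1}"
  shows "\<exists>K>0. \<forall>\<tau>\<ge>0. \<forall>b. 0 \<le> b \<and> b < 1 \<longrightarrow>
           inverse K * exp (\<mu> * \<tau>) / ((1 + exp \<tau> * b) powr \<mu> * (1 - b) powr (1 - \<mu>))
             \<le> Wfun \<mu> \<beta> C \<tau> b \<and>
           Wfun \<mu> \<beta> C \<tau> b
             \<le> K * exp (\<mu> * \<tau>) / ((1 + exp \<tau> * b) powr \<mu> * (1 - b) powr (1 - \<mu>))"
proof -
  have t0: "integral {0..} (\<lambda>s. \<bar>g s\<bar>) \<le> K0" using tail[rule_format, of 0] by simp
  have EB: "exp (-K0) * (1+a) powr (-\<mu>) \<le> exp (- Bfun \<beta> a) \<and>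
            exp (- Bfun \<beta> a) \<le> exp K0 * (1+a) powr (-\<mu>)" if a: "0 \<le> a" for a
  proof -
    have d: "\<bar>Bfun \<beta> a - \<mu> * ln (1+a)\<bar> \<le> K0" by (rule Bbound[OF decomp gL1 t0 a])
    have e: "exp (- Bfun \<beta> a) = (1+a) powr (-\<mu>) * exp (- (Bfun \<beta> a - \<mu> * ln (1+a)))"
      using a by (simp add: powr_def exp_add[symmetric])
    define E where "E = exp (- (Bfun \<beta> a - \<mu> * ln (1+a)))"
    have "exp (-K0) \<le> E" "E \<le> exp K0"
      using d unfolding E_def by auto
    moreover have "(1+a) powr (-\<mu>) \<ge> 0" by simp
    ultimately show ?thesis unfolding e E_def[symmetric]
      by (metis mult.commute mult_left_mono)
  qed
  define J where "J = 2 powr (1-\<mu>) / (1-\<mu>) + 2 powr \<mu> / \<mu>"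
  have Jpos: "J > 0" using mu unfolding J_def by (intro add_pos_pos divide_pos_pos) auto
  have Cb: "C \<tau> \<le> exp K0 * 2 powr \<mu> * exp (\<mu> * \<tau>) \<and> 1 \<le> C \<tau> * exp K0 * exp (-\<mu> * \<tau>) * J"
    if tau: "\<tau> \<ge> 0" for \<tau>
  proof -
    define Wt where "Wt = Wfun \<mu> \<beta> C \<tau>"
    have Cp: "C \<tau> > 0" using Cpos tau by auto
    have I1: "(Wt has_integral 1) {0<..<1}" using Cnorm tau spike01' unfolding Wt_def by blast
    have et: "exp \<tau> \<ge> 1" using tau by simp
    define c0 where "c0 = C \<tau> * (exp (-K0) * (2 powr (-\<mu>) * exp (-\<mu> * \<tau>)))"
    have low: "c0 \<le> Wt b" if b: "b \<in> {0<..<1}" for b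
    proof -
      define a where "a = exp \<tau> * b"
      have a0: "a \<ge> 0" using b by (simp add: a_def)
      have "a \<le> exp \<tau>" using b by (simp add: a_def)
      then have "1 + a \<le> 2 * exp \<tau>" using et by linarith
      then have "(2 * exp \<tau>) powr (-\<mu>) \<le> (1+a) powr (-\<mu>)"
        using a0 mu by (intro powr_mono2') auto
      also have "(2 * exp \<tau>) powr (-\<mu>) = 2 powr (-\<mu>) * exp (-\<mu> * \<tau>)"
        by (simp add: powr_mult exp_powr_real mult.commute)
      finally have p1: "2 powr (-\<mu>) * exp (-\<mu> * \<tau>) \<le> (1+a) powr (-\<mu>)" .
      have E1: "exp (-K0) * (2 powr (-\<mu>) * exp (-\<mu> * \<tau>)) \<le> exp (- Bfun \<beta> a)"
        using EB[OF a0] p1 by (meson mult_left_mono exp_ge_zero order_trans less_imp_le exp_gt_zero)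
      have p2: "1 \<le> (1-b) powr (\<mu>-1)"
        using powr_mono2'[of "\<mu>-1" "1-b" 1] b mu by auto
      have "c0 \<le> C \<tau> * exp (- Bfun \<beta> a)" unfolding c0_def using E1 Cp by simp
      also have "\<dots> \<le> C \<tau> * exp (- Bfun \<beta> a) * (1-b) powr (\<mu>-1)"
        using p2 Cp mult_left_mono[OF p2, of "C \<tau> * exp (- Bfun \<beta> a)"] by simp
      finally show ?thesis by (simp add: Wt_def Wfun_def a_def)
    qed
    have c0int: "((\<lambda>b::real. c0) has_integral c0) {0<..<1}"
    proof -
      have "((\<lambda>b::real. c0) has_integral c0) {0..1}" using has_integral_const_real[of c0 0 1] by simp
      then show ?thesis using spike01 by blast
    qed
    have "c0 \<le> 1" by (rule has_integral_le[OF c0int I1 low])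
    then have up: "C \<tau> \<le> exp K0 * 2 powr \<mu> * exp (\<mu> * \<tau>)"
      unfolding c0_def using Cp by (simp add: powr_minus exp_minus field_simps)
    define h where "h b = 2 powr (1-\<mu>) * b powr (-\<mu>) + 2 powr \<mu> * (1-b) powr (\<mu>-1)" for b
    have hint: "(h has_integral J) {0<..<1}"
    proof -
      have "(h has_integral (2 powr (1-\<mu>) * (1/(1-\<mu>)) + 2 powr \<mu> * (1/\<mu>))) {0..1}"
        unfolding h_def
        by (intro has_integral_add has_integral_mult_right int_pow int_refl) (use mu in auto)
      then have "(h has_integral J) {0..1}" by (simp add: J_def)
      then show ?thesis using spike01 by blast
    qed
    define c1 where "c1 = C \<tau> * exp K0 * exp (-\<mu> * \<tau>)"
    have upp: "Wt b \<le> c1 * h b" if b: "b \<in> {0<..<1}" for b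
    proof -
      define a where "a = exp \<tau> * b"
      have a0: "a > 0" using b by (simp add: a_def)
      have "a powr (-\<mu>) \<ge> (1+a) powr (-\<mu>)"
        using a0 mu by (intro powr_mono2') auto
      moreover have "a powr (-\<mu>) = exp (-\<mu> * \<tau>) * b powr (-\<mu>)"
        by (simp add: a_def powr_mult exp_powr_real mult.commute)
      ultimately have p1: "(1+a) powr (-\<mu>) \<le> exp (-\<mu> * \<tau>) * b powr (-\<mu>)" by simp
      have E1: "exp (- Bfun \<beta> a) \<le> exp K0 * (exp (-\<mu> * \<tau>) * b powr (-\<mu>))"
        using EB[of a] a0 p1 by (meson mult_left_mono exp_ge_zero order_trans less_imp_le)
      have p2: "b powr (-\<mu>) * (1-b) powr (\<mu>-1) \<le> h b"
      proof (cases "b \<le> 1/2")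
        case True
        have "(1-b) powr (\<mu>-1) \<le> (1/2) powr (\<mu>-1)"
          using True b mu by (intro powr_mono2') auto
        also have "(1/2::real) powr (\<mu>-1) = 2 powr (1-\<mu>)"
          by (simp add: powr_divide powr_minus_divide[symmetric] flip: powr_minus)
        finally have "b powr (-\<mu>) * (1-b) powr (\<mu>-1) \<le> b powr (-\<mu>) * 2 powr (1-\<mu>)"
          by (simp add: mult_left_mono)
        then show ?thesis unfolding h_def by (simp add: mult.commute add_increasing2)
      next
        case False
        have "b powr (-\<mu>) \<le> (1/2) powr (-\<mu>)"
          using False b mu by (intro powr_mono2') auto
        also have "(1/2::real) powr (-\<mu>) = 2 powr \<mu>"
          by (simp add: powr_divide powr_minus_divide[symmetric] flip: powr_minus)
        finally have "b powr (-\<mu>) * (1-b) powr (\<mu>-1) \<le> 2 powr \<mu> * (1-b) powr (\<mu>-1)"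
          by (simp add: mult_right_mono)
        then show ?thesis unfolding h_def by (simp add: add_increasing)
      qed
      have "Wt b = C \<tau> * exp (- Bfun \<beta> a) * (1-b) powr (\<mu>-1)"
        by (simp add: Wt_def Wfun_def a_def)
      also have "\<dots> \<le> C \<tau> * (exp K0 * (exp (-\<mu> * \<tau>) * b powr (-\<mu>))) * (1-b) powr (\<mu>-1)"
        using E1 Cp by (intro mult_right_mono mult_left_mono) auto
      also have "\<dots> = c1 * (b powr (-\<mu>) * (1-b) powr (\<mu>-1))" by (simp add: c1_def)
      also have "\<dots> \<le> c1 * h b" using p2 Cp by (simp add: c1_def mult_left_mono)
      finally show ?thesis .
    qed
    have "1 \<le> c1 * J"
      by (rule has_integral_le[OF I1 has_integral_mult_right[OF hint] upp])
    then show ?thesis using up by (simp add: c1_def)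
  qed
  define K1 where "K1 = exp K0 * 2 powr \<mu> * exp K0"
  define K2 where "K2 = exp K0 * J * exp K0"
  have K1p: "K1 > 0" and K2p: "K2 > 0" using Jpos by (auto simp: K1_def K2_def)
  show ?thesis
  proof (intro exI[of _ "max K1 K2"] conjI allI impI)
    show "max K1 K2 > 0" using K1p by simp
    fix \<tau> b :: real assume tau: "\<tau> \<ge> 0" and b: "0 \<le> b \<and> b < 1"
    define a where "a = exp \<tau> * b"
    have a0: "a \<ge> 0" using b by (simp add: a_def)
    define P where "P = (1 + a) powr \<mu>"
    define Q where "Q = (1 - b) powr (1 - \<mu>)"
    define E where "E = exp (- Bfun \<beta> (exp \<tau> * b))"
    have Pp: "P > 0" using a0 by (simp add: P_def)
    have Qp: "Q > 0" using b by (simp add: Q_def)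
    have Ep: "E > 0" by (simp add: E_def)
    have pa: "(1+a) powr (-\<mu>) = 1 / P" by (simp add: P_def powr_minus divide_inverse)
    have qa: "(1-b) powr (\<mu>-1) = 1 / Q"
      using powr_minus[of "1-b" "1-\<mu>"] by (simp add: Q_def divide_inverse)
    have Elo: "exp (-K0) / P \<le> E" and Eup: "E \<le> exp K0 / P"
      using EB[OF a0] pa by (simp_all add: E_def a_def divide_inverse)
    have W: "Wfun \<mu> \<beta> C \<tau> b = C \<tau> * E / Q" by (simp add: Wfun_def qa E_def)
    have Cp: "C \<tau> > 0" using Cpos tau by auto
    have CU: "C \<tau> \<le> exp K0 * 2 powr \<mu> * exp (\<mu> * \<tau>)" and CL0: "1 \<le> C \<tau> * exp K0 * exp (-\<mu> * \<tau>) * J"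
      using Cb[OF tau] by auto
    have "C \<tau> * E \<le> (exp K0 * 2 powr \<mu> * exp (\<mu> * \<tau>)) * (exp K0 / P)"
      by (rule mult_mono[OF CU Eup]) (use Ep in auto)
    also have "\<dots> = K1 * exp (\<mu> * \<tau>) / P" by (simp add: K1_def)
    also have "\<dots> \<le> max K1 K2 * exp (\<mu> * \<tau>) / P"
      using Pp by (intro divide_right_mono mult_right_mono) auto
    finally have "C \<tau> * E / Q \<le> max K1 K2 * exp (\<mu> * \<tau>) / P / Q"
      using Qp by (intro divide_right_mono) auto
    then show "Wfun \<mu> \<beta> C \<tau> b \<le> max K1 K2 * exp (\<mu> * \<tau>) / ((1 + exp \<tau> * b) powr \<mu> * (1 - b) powr (1 - \<mu>))"
      by (simp add: W P_def Q_def a_def divide_divide_eq_left)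
    have "exp (\<mu> * \<tau>) \<le> exp (\<mu> * \<tau>) * (C \<tau> * exp K0 * exp (-\<mu> * \<tau>) * J)"
      using CL0 by simp
    also have "\<dots> = C \<tau> * (exp K0 * J)" by (simp add: exp_minus field_simps)
    finally have CL: "exp (\<mu> * \<tau>) / (exp K0 * J) \<le> C \<tau>"
      using Jpos by (simp add: pos_divide_le_eq)
    have "exp (\<mu> * \<tau>) / (exp K0 * J) * (exp (-K0) / P) \<le> C \<tau> * E"
      by (rule mult_mono[OF CL Elo]) (use Cp Pp in auto)
    moreover have "exp (\<mu> * \<tau>) / (exp K0 * J) * (exp (-K0) / P) = inverse K2 * exp (\<mu> * \<tau>) / P"
      by (simp add: K2_def exp_minus field_simps)
    moreover have "inverse (max K1 K2) * exp (\<mu> * \<tau>) / P \<le> inverse K2 * exp (\<mu> * \<tau>) / P"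
      using Pp K2p by (intro divide_right_mono mult_right_mono le_imp_inverse_le) auto
    ultimately have "inverse (max K1 K2) * exp (\<mu> * \<tau>) / P / Q \<le> C \<tau> * E / Q"
      using Qp by (intro divide_right_mono) auto
    then show "inverse (max K1 K2) * exp (\<mu> * \<tau>) / ((1 + exp \<tau> * b) powr \<mu> * (1 - b) powr (1 - \<mu>)) \<le> Wfun \<mu> \<beta> C \<tau> b"
      by (simp add: W P_def Q_def a_def divide_divide_eq_left)
  qed
qed

end
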